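(* Every ideal $J$ of $\widetilde{\mathbb{R}}_{sm}$ is absolutely convex: if $x\in J$ and $y\in\widetilde{\mathbb{R}}_{sm}$ with $|y|\le|x|$, then $y\in J$.
   Context: Let $I=(0,1]$. $\widetilde{\mathbb{R}}_{sm}=\mathcal{E}_{M,sm}/\mathcal{N}_{sm}$ where $\mathcal{E}_{M,sm}$ is the set of smooth nets $(r_\varepsilon)_{\varepsilon\in I}\in\mathbb{R}^I$ with $|r_\varepsilon|=O(\varepsilon^{-N})$ for some $N$, and $\mathcal{N}_{sm}$ those with $|r_\varepsilon|=O(\varepsilon^m)$ for all $m$. The natural map $\tau_{sm}$ from $\widetilde{\mathbb{R}}_{sm}$ to the analogous ring $\widetilde{\mathbb{R}}_{co}$ of continuously parametrized nets is a ring isomorphism. Order: $r\le s$ iff there are representatives with $r_\varepsilon\le s_\varepsilon$ for all $\varepsilon$. Absolute value: $|x|=\tau_{sm}^{-1}([(|x_\varepsilon|)_\varepsilon])$. *)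

theory Defs
  imports Complex_Main "HOL-Algebra.Ideal"
begin

text \<open>Parameter interval I = (0,1]. Nets are functions real => real; only their
  values on I matter.\<close>

definition Iset :: "real set" where "Iset = {0<..1}"

definition smooth_net :: "(real \<Rightarrow> real) \<Rightarrow> bool" where
  "smooth_net r \<longleftrightarrow> (\<exists>D :: nat \<Rightarrow> real \<Rightarrow> real.
      (\<forall>e\<in>Iset. D 0 e = r e) \<and>
      (\<forall>n. \<forall>e\<in>Iset. (D n has_real_derivative D (Suc n) e) (at e within Iset)))"

definition moderate :: "(real \<Rightarrow> real) \<Rightarrow> bool" where
  "moderate r \<longleftrightarrow> (\<exists>N::nat. \<exists>C \<eta>. 0 < \<eta> \<and>
      (\<forall>e. 0 < e \<and> e < \<eta> \<and> e \<le> 1 \<longrightarrow> \<bar>r e\<bar> \<le> C / e ^ N))"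

definition negligible :: "(real \<Rightarrow> real) \<Rightarrow> bool" where
  "negligible r \<longleftrightarrow> (\<forall>m::nat. \<exists>C \<eta>. 0 < \<eta> \<and>
      (\<forall>e. 0 < e \<and> e < \<eta> \<and> e \<le> 1 \<longrightarrow> \<bar>r e\<bar> \<le> C * e ^ m))"

definition EM_sm :: "(real \<Rightarrow> real) set" where
  "EM_sm = {r. smooth_net r \<and> moderate r}"

definition EM_co :: "(real \<Rightarrow> real) set" where
  "EM_co = {r. continuous_on Iset r \<and> moderate r}"

definition cls_sm :: "(real \<Rightarrow> real) \<Rightarrow> (real \<Rightarrow> real) set" where
  "cls_sm r = {s \<in> EM_sm. negligible (\<lambda>e. r e - s e)}"

definition cls_co :: "(real \<Rightarrow> real) \<Rightarrow> (real \<Rightarrow> real) set" where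
  "cls_co r = {s \<in> EM_co. negligible (\<lambda>e. r e - s e)}"

definition Rsm :: "(real \<Rightarrow> real) set set" where
  "Rsm = cls_sm ` EM_sm"

definition rep :: "(real \<Rightarrow> real) set \<Rightarrow> real \<Rightarrow> real" where
  "rep X = (SOME r. r \<in> X)"

definition Rsm_ring :: "(real \<Rightarrow> real) set ring" where
  "Rsm_ring = \<lparr>carrier = Rsm,
      monoid.mult = (\<lambda>X Y. cls_sm (\<lambda>e. rep X e * rep Y e)),
      one = cls_sm (\<lambda>_. 1),
      zero = cls_sm (\<lambda>_. 0),
      add = (\<lambda>X Y. cls_sm (\<lambda>e. rep X e + rep Y e))\<rparr>"

definition tau_sm :: "(real \<Rightarrow> real) set \<Rightarrow> (real \<Rightarrow> real) set" where
  "tau_sm X = cls_co (rep X)"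

definition le_sm :: "(real \<Rightarrow> real) set \<Rightarrow> (real \<Rightarrow> real) set \<Rightarrow> bool" where
  "le_sm X Y \<longleftrightarrow> (\<exists>r\<in>X. \<exists>s\<in>Y. \<forall>e\<in>Iset. r e \<le> s e)"

definition abs_sm :: "(real \<Rightarrow> real) set \<Rightarrow> (real \<Rightarrow> real) set" where
  "abs_sm X = (THE Y. Y \<in> Rsm \<and> tau_sm Y = cls_co (\<lambda>e. \<bar>rep X e\<bar>))"

end

theory Submission
  imports Defs
begin

lemma smooth_cong:
  assumes "smooth_net f" "\<And>e. e \<in> Iset \<Longrightarrow> f e = g e"
  shows "smooth_net g"
  using assms unfolding smooth_net_def by auto

lemma deriv_cong_Iset:
  assumes "(f has_real_derivative d) (at e within Iset)" "e \<in> Iset"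
    "\<And>x. x \<in> Iset \<Longrightarrow> f x = g x"
  shows "(g has_real_derivative d) (at e within Iset)"
  by (rule has_field_derivative_transform_within[OF assms(1) zero_less_one assms(2)]) (use assms(3) in auto)

lemma smooth_coind:
  assumes step: "\<And>g. g \<in> T \<Longrightarrow> \<exists>g'\<in>T. \<forall>e\<in>Iset. (g has_real_derivative g' e) (at e within Iset)"
    and f: "f \<in> T"
  shows "smooth_net f"
proof -
  define st where "st g = (SOME g'. g' \<in> T \<and> (\<forall>e\<in>Iset. (g has_real_derivative g' e) (at e within Iset)))" for g
  have st: "st g \<in> T \<and> (\<forall>e\<in>Iset. (g has_real_derivative st g e) (at e within Iset))" if "g \<in> T" for g
  proof -
    have "\<exists>g'. g' \<in> T \<and> (\<forall>e\<in>Iset. (g has_real_derivative g' e) (at e within Iset))"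
      using step[OF that] by blast
    then show ?thesis unfolding st_def by (rule someI_ex)
  qed
  define D where "D n = (st ^^ n) f" for n
  have DT: "D n \<in> T" for n
    by (induction n) (auto simp: D_def f st)
  have "\<forall>n. \<forall>e\<in>Iset. (D n has_real_derivative D (Suc n) e) (at e within Iset)"
    using st DT by (auto simp: D_def)
  then show ?thesis unfolding smooth_net_def by (intro exI[of _ D]) (auto simp: D_def)
qed

lemma smooth_deriv:
  assumes "smooth_net f"
  shows "\<exists>f'. smooth_net f' \<and> (\<forall>e\<in>Iset. (f has_real_derivative f' e) (at e within Iset))"
proof -
  obtain D where D0: "\<forall>e\<in>Iset. D 0 e = f e"
    and DS: "\<forall>n. \<forall>e\<in>Iset. (D n has_real_derivative D (Suc n) e) (at e within Iset)"
    using assms unfolding smooth_net_def by blast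
  have "smooth_net (D 1)"
    unfolding smooth_net_def by (intro exI[of _ "\<lambda>n. D (Suc n)"]) (use DS in auto)
  moreover have "\<forall>e\<in>Iset. (f has_real_derivative D 1 e) (at e within Iset)"
    using DS D0 by (auto intro: deriv_cong_Iset)
  ultimately show ?thesis by blast
qed

inductive_set alg :: "(real \<Rightarrow> real) set \<Rightarrow> (real \<Rightarrow> real) set" for B where
  base: "f \<in> B \<Longrightarrow> f \<in> alg B"
| const: "(\<lambda>_. c) \<in> alg B"
| add: "f \<in> alg B \<Longrightarrow> g \<in> alg B \<Longrightarrow> (\<lambda>e. f e + g e) \<in> alg B"
| mul: "f \<in> alg B \<Longrightarrow> g \<in> alg B \<Longrightarrow> (\<lambda>e. f e * g e) \<in> alg B"

lemma alg_smooth: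
  assumes "\<And>f. f \<in> B \<Longrightarrow> \<exists>f'\<in>alg B. \<forall>e\<in>Iset. (f has_real_derivative f' e) (at e within Iset)"
    and "h \<in> alg B"
  shows "smooth_net h"
proof (rule smooth_coind[OF _ assms(2)])
  fix g assume "g \<in> alg B"
  then show "\<exists>g'\<in>alg B. \<forall>e\<in>Iset. (g has_real_derivative g' e) (at e within Iset)"
  proof induction
    case (base f) then show ?case using assms(1) by blast
  next
    case (const c) then show ?case by (intro bexI[of _ "\<lambda>_. 0"]) (auto intro: alg.const)
  next
    case (add f g)
    then obtain f' g' where "f' \<in> alg B" "g' \<in> alg B"
      "\<forall>e\<in>Iset. (f has_real_derivative f' e) (at e within Iset)"
      "\<forall>e\<in>Iset. (g has_real_derivative g' e) (at e within Iset)" by blast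
    then show ?case by (intro bexI[of _ "\<lambda>e. f' e + g' e"]) (auto intro: alg.add derivative_intros)
  next
    case (mul f g)
    then obtain f' g' where "f' \<in> alg B" "g' \<in> alg B"
      "\<forall>e\<in>Iset. (f has_real_derivative f' e) (at e within Iset)"
      "\<forall>e\<in>Iset. (g has_real_derivative g' e) (at e within Iset)" by blast
    then show ?case
      by (intro bexI[of _ "\<lambda>e. f e * g' e + f' e * g e"]) (auto intro!: alg.add alg.mul mul.hyps DERIV_mult')
  qed
qed

lemma smooth_alg_self:
  assumes "h \<in> alg {f. smooth_net f}" shows "smooth_net h"
  by (rule alg_smooth[OF _ assms]) (use smooth_deriv alg.base in blast)

lemma smooth_add: "smooth_net f \<Longrightarrow> smooth_net g \<Longrightarrow> smooth_net (\<lambda>e. f e + g e)"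
  by (rule smooth_alg_self) (auto intro: alg.intros)
lemma smooth_mul: "smooth_net f \<Longrightarrow> smooth_net g \<Longrightarrow> smooth_net (\<lambda>e. f e * g e)"
  by (rule smooth_alg_self) (auto intro: alg.intros)
lemma smooth_const: "smooth_net (\<lambda>_. c)"
  by (rule smooth_alg_self) (auto intro: alg.intros)
lemma smooth_minus: "smooth_net f \<Longrightarrow> smooth_net g \<Longrightarrow> smooth_net (\<lambda>e. f e - g e)"
  using smooth_add[of f "\<lambda>e. (-1) * g e"] smooth_mul[OF smooth_const, of g "-1"] by simp
lemma smooth_id: "smooth_net (\<lambda>e. e)"
  by (rule alg_smooth[of "{\<lambda>e. e}"]) (auto intro!: bexI[of _ "\<lambda>_. 1"] alg.intros derivative_eq_intros)

lemma smooth_comp: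
  assumes f: "smooth_net f" and U: "\<And>e. e \<in> Iset \<Longrightarrow> f e \<in> U"
    and phi: "\<And>j u. u \<in> U \<Longrightarrow> (\<phi> j has_real_derivative \<phi> (Suc j) u) (at u)"
  shows "smooth_net (\<lambda>e. \<phi> 0 (f e))"
proof (rule alg_smooth[of "{f. smooth_net f} \<union> range (\<lambda>j e. \<phi> j (f e))"])
  fix g assume "g \<in> {f. smooth_net f} \<union> range (\<lambda>j e. \<phi> j (f e))"
  then show "\<exists>g'\<in>alg ({f. smooth_net f} \<union> range (\<lambda>j e. \<phi> j (f e))). \<forall>e\<in>Iset. (g has_real_derivative g' e) (at e within Iset)"
  proof
    assume "g \<in> {f. smooth_net f}"
    then show ?thesis using smooth_deriv[of g] by (auto intro: alg.base)
  next
    assume "g \<in> range (\<lambda>j e. \<phi> j (f e))"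
    then obtain j where g: "g = (\<lambda>e. \<phi> j (f e))" by auto
    obtain f' where f': "smooth_net f'" "\<forall>e\<in>Iset. (f has_real_derivative f' e) (at e within Iset)"
      using smooth_deriv[OF f] by blast
    have m: "(\<lambda>e. \<phi> (Suc j) (f e) * f' e) \<in> alg ({f. smooth_net f} \<union> range (\<lambda>j e. \<phi> j (f e)))"
      by (rule alg.mul; rule alg.base) (use f' in auto)
    show ?thesis unfolding g
    proof (intro bexI[OF _ m] ballI)
      fix e assume e: "e \<in> Iset"
      show "((\<lambda>e. \<phi> j (f e)) has_real_derivative \<phi> (Suc j) (f e) * f' e) (at e within Iset)"
        using DERIV_chain2[of "\<phi> j" "\<phi> (Suc j) (f e)" f e "f' e" Iset] phi[OF U[OF e]] f'(2) e by blast
    qed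
  qed
qed (auto intro: alg.base)


lemma Iset_iff: "e \<in> Iset \<longleftrightarrow> 0 < e \<and> e \<le> 1" by (auto simp: Iset_def)

lemma neg_dom:
  assumes "negligible f" "\<And>e. e \<in> Iset \<Longrightarrow> \<bar>g e\<bar> \<le> \<bar>f e\<bar>"
  shows "negligible g"
  unfolding negligible_def
proof
  fix m :: nat
  obtain C \<eta> where "0 < \<eta>" and h: "\<forall>e. 0 < e \<and> e < \<eta> \<and> e \<le> 1 \<longrightarrow> \<bar>f e\<bar> \<le> C * e ^ m"
    using assms(1) unfolding negligible_def by blast
  have "\<bar>g e\<bar> \<le> C * e ^ m" if "0 < e \<and> e < \<eta> \<and> e \<le> 1" for e
    using h[rule_format, OF that] assms(2)[of e] that by (simp add: Iset_iff)
  then show "\<exists>C \<eta>. 0 < \<eta> \<and> (\<forall>e. 0 < e \<and> e < \<eta> \<and> e \<le> 1 \<longrightarrow> \<bar>g e\<bar> \<le> C * e ^ m)"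
    using \<open>0 < \<eta>\<close> by blast
qed

lemma neg_cmul:
  assumes "negligible f" shows "negligible (\<lambda>e. c * f e)"
  unfolding negligible_def
proof
  fix m :: nat
  obtain C \<eta> where "0 < \<eta>" and h: "\<forall>e. 0 < e \<and> e < \<eta> \<and> e \<le> 1 \<longrightarrow> \<bar>f e\<bar> \<le> C * e ^ m"
    using assms(1) unfolding negligible_def by blast
  have "\<bar>c * f e\<bar> \<le> (\<bar>c\<bar> * C) * e ^ m" if "0 < e \<and> e < \<eta> \<and> e \<le> 1" for e
    using h[rule_format, OF that] by (simp add: abs_mult mult.assoc mult_left_mono)
  then show "\<exists>C \<eta>. 0 < \<eta> \<and> (\<forall>e. 0 < e \<and> e < \<eta> \<and> e \<le> 1 \<longrightarrow> \<bar>c * f e\<bar> \<le> C * e ^ m)"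
    using \<open>0 < \<eta>\<close> by blast
qed

lemma neg_add:
  assumes "negligible f" "negligible g" shows "negligible (\<lambda>e. f e + g e)"
  unfolding negligible_def
proof
  fix m :: nat
  obtain C1 \<eta>1 where "0 < \<eta>1" and h1: "\<forall>e. 0 < e \<and> e < \<eta>1 \<and> e \<le> 1 \<longrightarrow> \<bar>f e\<bar> \<le> C1 * e ^ m"
    using assms(1) unfolding negligible_def by blast
  obtain C2 \<eta>2 where "0 < \<eta>2" and h2: "\<forall>e. 0 < e \<and> e < \<eta>2 \<and> e \<le> 1 \<longrightarrow> \<bar>g e\<bar> \<le> C2 * e ^ m"
    using assms(2) unfolding negligible_def by blast
  have "\<bar>f e + g e\<bar> \<le> (C1 + C2) * e ^ m" if "0 < e \<and> e < min \<eta>1 \<eta>2 \<and> e \<le> 1" for e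
    using h1[rule_format, of e] h2[rule_format, of e] that by (simp add: distrib_right)
  then show "\<exists>C \<eta>. 0 < \<eta> \<and> (\<forall>e. 0 < e \<and> e < \<eta> \<and> e \<le> 1 \<longrightarrow> \<bar>f e + g e\<bar> \<le> C * e ^ m)"
    using \<open>0 < \<eta>1\<close> \<open>0 < \<eta>2\<close> by (intro exI[of _ "C1+C2"] exI[of _ "min \<eta>1 \<eta>2"]) auto
qed

lemma neg_diff: "negligible f \<Longrightarrow> negligible g \<Longrightarrow> negligible (\<lambda>e. f e - g e)"
  using neg_add[of f "\<lambda>e. (-1) * g e"] neg_cmul[of g "-1"] by simp

lemma neg_zero: "negligible (\<lambda>e. 0)"
  unfolding negligible_def by (intro allI exI[of _ 0] exI[of _ 1]) auto

lemma neg_swap: "negligible (\<lambda>e. f e - g e) \<Longrightarrow> negligible (\<lambda>e. g e - f e)"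
  using neg_cmul[of "\<lambda>e. f e - g e" "-1"] by simp

lemma neg_trans: "negligible (\<lambda>e. f e - g e) \<Longrightarrow> negligible (\<lambda>e. g e - h e) \<Longrightarrow> negligible (\<lambda>e. f e - h e)"
  using neg_add[of "\<lambda>e. f e - g e" "\<lambda>e. g e - h e"] by simp

lemma mod_bound_nonneg:
  fixes r C e :: real
  assumes "\<bar>r\<bar> \<le> C / e ^ N" "0 < e" shows "0 \<le> C"
proof -
  have "0 \<le> C / e ^ N" using order_trans[OF abs_ge_zero[of r] assms(1)] .
  moreover have "0 < e ^ N" using assms(2) by simp
  ultimately show ?thesis by (auto simp: zero_le_divide_iff)
qed

lemma neg_mod_mul:
  assumes "moderate f" "negligible g" shows "negligible (\<lambda>e. f e * g e)"
  unfolding negligible_def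
proof
  fix m :: nat
  obtain N C1 \<eta>1 where "0 < \<eta>1" and h1: "\<forall>e. 0 < e \<and> e < \<eta>1 \<and> e \<le> 1 \<longrightarrow> \<bar>f e\<bar> \<le> C1 / e ^ N"
    using assms(1) unfolding moderate_def by blast
  obtain C2 \<eta>2 where "0 < \<eta>2" and h2: "\<forall>e. 0 < e \<and> e < \<eta>2 \<and> e \<le> 1 \<longrightarrow> \<bar>g e\<bar> \<le> C2 * e ^ (m + N)"
    using assms(2) unfolding negligible_def by blast
  have "\<bar>f e * g e\<bar> \<le> (C1 * C2) * e ^ m" if e: "0 < e \<and> e < min \<eta>1 \<eta>2 \<and> e \<le> 1" for e
  proof -
    have a: "\<bar>f e\<bar> \<le> C1 / e ^ N" and b: "\<bar>g e\<bar> \<le> C2 * e ^ (m + N)" using h1 h2 e by auto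
    have "0 \<le> C1" using mod_bound_nonneg[OF a] e by auto
    have "\<bar>f e * g e\<bar> \<le> (C1 / e ^ N) * (C2 * e ^ (m + N))"
      unfolding abs_mult by (rule mult_mono[OF a b]) (use \<open>0 \<le> C1\<close> e in auto)
    also have "\<dots> = (C1 * C2) * e ^ m" using e by (simp add: power_add field_simps)
    finally show ?thesis .
  qed
  then show "\<exists>C \<eta>. 0 < \<eta> \<and> (\<forall>e. 0 < e \<and> e < \<eta> \<and> e \<le> 1 \<longrightarrow> \<bar>f e * g e\<bar> \<le> C * e ^ m)"
    using \<open>0 < \<eta>1\<close> \<open>0 < \<eta>2\<close> by (intro exI[of _ "C1*C2"] exI[of _ "min \<eta>1 \<eta>2"]) auto
qed

lemma neg_sqrt:
  assumes "negligible f" shows "negligible (\<lambda>e. sqrt \<bar>f e\<bar>)"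
  unfolding negligible_def
proof
  fix m :: nat
  obtain C \<eta> where "0 < \<eta>" and h: "\<forall>e. 0 < e \<and> e < \<eta> \<and> e \<le> 1 \<longrightarrow> \<bar>f e\<bar> \<le> C * e ^ (2*m)"
    using assms(1) unfolding negligible_def by blast
  have "\<bar>sqrt \<bar>f e\<bar>\<bar> \<le> sqrt \<bar>C\<bar> * e ^ m" if e: "0 < e \<and> e < \<eta> \<and> e \<le> 1" for e
  proof -
    have "\<bar>f e\<bar> \<le> \<bar>C\<bar> * (e ^ m)\<^sup>2" using h e
    proof -
      have "\<bar>f e\<bar> \<le> C * e ^ (2*m)" using h e by blast
      also have "\<dots> \<le> \<bar>C\<bar> * e ^ (2*m)" using e by (intro mult_right_mono) auto
      also have "\<dots> = \<bar>C\<bar> * (e ^ m)\<^sup>2" by (simp add: power_mult[symmetric] mult.commute)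
      finally show ?thesis .
    qed
    then have "sqrt \<bar>f e\<bar> \<le> sqrt (\<bar>C\<bar> * (e ^ m)\<^sup>2)" by (rule real_sqrt_le_mono)
    also have "\<dots> = sqrt \<bar>C\<bar> * e ^ m" using e by (simp add: real_sqrt_mult)
    finally show ?thesis by simp
  qed
  then show "\<exists>C \<eta>. 0 < \<eta> \<and> (\<forall>e. 0 < e \<and> e < \<eta> \<and> e \<le> 1 \<longrightarrow> \<bar>sqrt \<bar>f e\<bar>\<bar> \<le> C * e ^ m)"
    using \<open>0 < \<eta>\<close> by blast
qed

lemma neg_delta: "negligible (\<lambda>e. exp (- 1 / e))"
  unfolding negligible_def
proof
  fix m :: nat
  have H: "\<bar>exp (- 1 / e)\<bar> \<le> (real m ^ m) * e ^ m" if e: "0 < e \<and> e < 1 \<and> e \<le> 1" for e :: real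
  proof (cases "m = 0")
    case True then show ?thesis using e by simp
  next
    case False
    have "1 / (real m * e) \<le> exp (1 / (real m * e))"
      using exp_ge_add_one_self[of "1 / (real m * e)"] by linarith
    then have "(1 / (real m * e)) ^ m \<le> exp (1 / (real m * e)) ^ m"
      by (rule power_mono) (use e in auto)
    also have "\<dots> = exp (1 / e)"
      using exp_of_nat_mult[of m "1 / (real m * e)"] False by simp
    finally have "1 \<le> exp (1/e) * (real m * e) ^ m"
      using e False by (simp add: power_divide field_simps)
    then have "exp (- 1 / e) \<le> exp (- 1 / e) * (exp (1/e) * (real m * e) ^ m)"
      by (simp add: mult_le_cancel_left1)
    also have "\<dots> = (real m * e) ^ m"
      by (simp add: exp_minus[symmetric] exp_add[symmetric])
    finally show ?thesis by (simp add: power_mult_distrib)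
  qed
  then show "\<exists>C \<eta>. 0 < \<eta> \<and> (\<forall>e. 0 < e \<and> e < \<eta> \<and> e \<le> 1 \<longrightarrow> \<bar>exp (- 1 / (e::real))\<bar> \<le> C * e ^ m)"
    using H by (intro exI[where x="real m ^ m"] exI[where x="1::real"]) simp
qed

lemma mod_dom:
  assumes "moderate f" "\<And>e. e \<in> Iset \<Longrightarrow> \<bar>g e\<bar> \<le> \<bar>f e\<bar>"
  shows "moderate g"
  using assms unfolding moderate_def Iset_iff by (meson order_trans)

lemma mod_const: "moderate (\<lambda>e. c)"
  unfolding moderate_def by (intro exI[of _ 0] exI[of _ "\<bar>c\<bar>"] exI[of _ 1]) auto

lemma mod_add:
  assumes "moderate f" "moderate g" shows "moderate (\<lambda>e. f e + g e)"
proof -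
  obtain N1 C1 \<eta>1 where "0 < \<eta>1" and h1: "\<forall>e. 0 < e \<and> e < \<eta>1 \<and> e \<le> 1 \<longrightarrow> \<bar>f e\<bar> \<le> C1 / e ^ N1"
    using assms(1) unfolding moderate_def by blast
  obtain N2 C2 \<eta>2 where "0 < \<eta>2" and h2: "\<forall>e. 0 < e \<and> e < \<eta>2 \<and> e \<le> 1 \<longrightarrow> \<bar>g e\<bar> \<le> C2 / e ^ N2"
    using assms(2) unfolding moderate_def by blast
  have "\<bar>f e + g e\<bar> \<le> (C1 + C2) / e ^ (N1 + N2)" if e: "0 < e \<and> e < min \<eta>1 \<eta>2 \<and> e \<le> 1" for e
  proof -
    have a: "\<bar>f e\<bar> \<le> C1 / e ^ N1" and b: "\<bar>g e\<bar> \<le> C2 / e ^ N2" using h1 h2 e by auto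
    have c1: "0 \<le> C1" using mod_bound_nonneg[OF a] e by auto
    have c2: "0 \<le> C2" using mod_bound_nonneg[OF b] e by auto
    have "C1 / e ^ N1 \<le> C1 / e ^ (N1 + N2)"
      using e c1 by (intro divide_left_mono) (auto simp: power_add intro!: mult_le_one power_le_one)
    moreover have "C2 / e ^ N2 \<le> C2 / e ^ (N1 + N2)"
      using e c2 by (intro divide_left_mono) (auto simp: power_add intro!: mult_le_one power_le_one)
    ultimately show ?thesis using a b by (simp add: add_divide_distrib)
  qed
  then show ?thesis unfolding moderate_def
    using \<open>0 < \<eta>1\<close> \<open>0 < \<eta>2\<close> by (intro exI[of _ "N1+N2"] exI[of _ "C1+C2"] exI[of _ "min \<eta>1 \<eta>2"]) auto
qed

lemma mod_mul:
  assumes "moderate f" "moderate g" shows "moderate (\<lambda>e. f e * g e)"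
proof -
  obtain N1 C1 \<eta>1 where "0 < \<eta>1" and h1: "\<forall>e. 0 < e \<and> e < \<eta>1 \<and> e \<le> 1 \<longrightarrow> \<bar>f e\<bar> \<le> C1 / e ^ N1"
    using assms(1) unfolding moderate_def by blast
  obtain N2 C2 \<eta>2 where "0 < \<eta>2" and h2: "\<forall>e. 0 < e \<and> e < \<eta>2 \<and> e \<le> 1 \<longrightarrow> \<bar>g e\<bar> \<le> C2 / e ^ N2"
    using assms(2) unfolding moderate_def by blast
  have "\<bar>f e * g e\<bar> \<le> (C1 * C2) / e ^ (N1 + N2)" if e: "0 < e \<and> e < min \<eta>1 \<eta>2 \<and> e \<le> 1" for e
  proof -
    have a: "\<bar>f e\<bar> \<le> C1 / e ^ N1" and b: "\<bar>g e\<bar> \<le> C2 / e ^ N2" using h1 h2 e by auto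
    have c1: "0 \<le> C1" using mod_bound_nonneg[OF a] e by auto
    have "\<bar>f e * g e\<bar> \<le> (C1 / e ^ N1) * (C2 / e ^ N2)"
      unfolding abs_mult by (rule mult_mono[OF a b]) (use c1 e in auto)
    then show ?thesis using e by (simp add: power_add)
  qed
  then show ?thesis unfolding moderate_def
    using \<open>0 < \<eta>1\<close> \<open>0 < \<eta>2\<close> by (intro exI[of _ "N1+N2"] exI[of _ "C1*C2"] exI[of _ "min \<eta>1 \<eta>2"]) auto
qed

lemma neg_imp_mod: assumes "negligible f" shows "moderate f"
proof -
  obtain C \<eta> where "0 < \<eta>" "\<forall>e. 0 < e \<and> e < \<eta> \<and> e \<le> 1 \<longrightarrow> \<bar>f e\<bar> \<le> C * e ^ 0"
    using assms unfolding negligible_def by blast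
  then show ?thesis unfolding moderate_def by (intro exI[of _ "0::nat"] exI[of _ C] exI[of _ \<eta>]) auto
qed


lemma smooth_powr:
  assumes f: "smooth_net f" and pos: "\<And>e. e \<in> Iset \<Longrightarrow> 0 < f e"
  shows "smooth_net (\<lambda>e. f e powr a)"
proof -
  define \<phi> where "\<phi> j x = (\<Prod>i<j. (a - real i)) * x powr (a - real j)" for j x
  have d: "(\<phi> j has_real_derivative \<phi> (Suc j) u) (at u)" if "u \<in> {0<..}" for j u
  proof -
    have "((\<lambda>x. (\<Prod>i<j. (a - real i)) * x powr (a - real j)) has_real_derivative
        (\<Prod>i<j. (a - real i)) * ((a - real j) * u powr (a - real j - 1))) (at u)"
      using that by (intro DERIV_cmult has_real_derivative_powr) auto
    moreover have "(\<Prod>i<j. (a - real i)) * ((a - real j) * u powr (a - real j - 1)) = \<phi> (Suc j) u"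
      by (simp add: \<phi>_def algebra_simps diff_diff_eq)
    ultimately show ?thesis unfolding \<phi>_def by simp
  qed
  have "smooth_net (\<lambda>e. \<phi> 0 (f e))"
    by (rule smooth_comp[of f "{0<..}" \<phi>, OF f _ d]) (use pos in auto)
  then show ?thesis by (simp add: \<phi>_def)
qed

lemma smooth_sqrt:
  assumes "smooth_net f" "\<And>e. e \<in> Iset \<Longrightarrow> 0 < f e"
  shows "smooth_net (\<lambda>e. sqrt (f e))"
proof (rule smooth_cong[OF smooth_powr[OF assms, of "1/2"]])
  fix e assume "e \<in> Iset" then have "0 < f e" by (rule assms(2))
  then show "f e powr (1/2) = sqrt (f e)" by (simp add: powr_half_sqrt)
qed

lemma smooth_inv:
  assumes "smooth_net f" "\<And>e. e \<in> Iset \<Longrightarrow> 0 < f e"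
  shows "smooth_net (\<lambda>e. 1 / f e)"
proof (rule smooth_cong[OF smooth_powr[OF assms, of "-1"]])
  fix e assume "e \<in> Iset" then have "0 < f e" by (rule assms(2))
  then show "f e powr (-1) = 1 / f e" by (simp add: powr_neg_one)
qed

definition \<delta> :: "real \<Rightarrow> real" where "\<delta> e = exp (- 1 / e)"

lemma smooth_delta: "smooth_net \<delta>"
proof -
  have h: "smooth_net (\<lambda>e. (-1) * (e powr (-1)))"
    by (intro smooth_mul smooth_const smooth_powr smooth_id) (auto simp: Iset_iff)
  have "smooth_net (\<lambda>e. exp ((-1) * (e powr (-1))))"
    by (rule smooth_comp[where \<phi> = "\<lambda>_. exp" and U = UNIV, OF h]) auto
  then show ?thesis
    by (rule smooth_cong) (auto simp: \<delta>_def Iset_iff powr_neg_one)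
qed

lemma delta_pos: "0 < \<delta> e" by (simp add: \<delta>_def)
lemma neg_delta': "negligible \<delta>" using neg_delta by (simp add: \<delta>_def[abs_def])

lemma smooth_cont: assumes "smooth_net f" shows "continuous_on Iset f"
proof -
  obtain D where D0: "\<forall>e\<in>Iset. D 0 e = f e"
    and DS: "\<forall>n. \<forall>e\<in>Iset. (D n has_real_derivative D (Suc n) e) (at e within Iset)"
    using assms unfolding smooth_net_def by blast
  have "continuous_on Iset (D 0)"
    unfolding continuous_on_eq_continuous_within using DS by (auto intro: DERIV_continuous)
  then show ?thesis using continuous_on_cong[of Iset Iset "D 0" f] D0 by auto
qed

lemma EM_sm_co: "f \<in> EM_sm \<Longrightarrow> f \<in> EM_co"
  by (auto simp: EM_sm_def EM_co_def smooth_cont)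

lemma cls_self: "f \<in> EM_sm \<Longrightarrow> f \<in> cls_sm f"
  by (simp add: cls_sm_def neg_zero)

lemma cls_co_self: "f \<in> EM_co \<Longrightarrow> f \<in> cls_co f"
  by (simp add: cls_co_def neg_zero)

lemma mem_cls: "g \<in> cls_sm f \<Longrightarrow> g \<in> EM_sm \<and> negligible (\<lambda>e. f e - g e)"
  by (simp add: cls_sm_def)

lemma cls_eq: "negligible (\<lambda>e. f e - g e) \<Longrightarrow> cls_sm f = cls_sm g"
  unfolding cls_sm_def using neg_trans neg_swap by blast

lemma cls_co_eq: "negligible (\<lambda>e. f e - g e) \<Longrightarrow> cls_co f = cls_co g"
  unfolding cls_co_def using neg_trans neg_swap by blast

lemma cls_in_Rsm: "f \<in> EM_sm \<Longrightarrow> cls_sm f \<in> Rsm"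
  by (simp add: Rsm_def)

lemma rep_in: assumes "X \<in> Rsm" shows "rep X \<in> X"
proof -
  obtain f where "f \<in> EM_sm" "X = cls_sm f" using assms by (auto simp: Rsm_def)
  then have "f \<in> X" using cls_self by simp
  then show ?thesis using someI[of "\<lambda>r. r \<in> X" f] by (simp add: rep_def)
qed

lemma Rsm_sub: "X \<in> Rsm \<Longrightarrow> X \<subseteq> EM_sm"
  by (auto simp: Rsm_def cls_sm_def)

lemma rep_EM: "X \<in> Rsm \<Longrightarrow> rep X \<in> EM_sm"
  using rep_in Rsm_sub by blast

lemma Rsm_eq: assumes "X \<in> Rsm" shows "X = cls_sm (rep X)"
proof -
  obtain f where "f \<in> EM_sm" "X = cls_sm f" using assms by (auto simp: Rsm_def)
  moreover have "negligible (\<lambda>e. f e - rep X e)" using rep_in[OF assms] calculation mem_cls by blast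
  ultimately show ?thesis using cls_eq by blast
qed

lemma rep_cls: "f \<in> EM_sm \<Longrightarrow> negligible (\<lambda>e. f e - rep (cls_sm f) e)"
  using rep_in[OF cls_in_Rsm] mem_cls by blast


lemma sqrt_le_abs_add: fixes x d :: real assumes "0 \<le> d"
  shows "sqrt (x\<^sup>2 + d) \<le> \<bar>x\<bar> + sqrt d"
proof -
  have "x\<^sup>2 + d \<le> (\<bar>x\<bar> + sqrt d)\<^sup>2"
    using assms by (simp add: power2_eq_square algebra_simps)
  then have "sqrt (x\<^sup>2 + d) \<le> sqrt ((\<bar>x\<bar> + sqrt d)\<^sup>2)" by (rule real_sqrt_le_mono)
  also have "\<dots> = \<bar>x\<bar> + sqrt d" using assms by simp
  finally show ?thesis .
qed

lemma abs_le_sqrt_add: fixes x d :: real assumes "0 \<le> d"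
  shows "\<bar>x\<bar> \<le> sqrt (x\<^sup>2 + d)"
proof -
  have "sqrt (x\<^sup>2) \<le> sqrt (x\<^sup>2 + d)" using assms by (intro real_sqrt_le_mono) simp
  then show ?thesis by simp
qed

lemma lin_aux: fixes P Q R :: real shows "0 \<le> P \<Longrightarrow> 0 \<le> Q \<Longrightarrow> 2*R \<le> P+Q \<Longrightarrow> P + 3*R \<le> 5/2*(P+Q)"
  unfolding distrib_left by linarith

lemma key_bound1:
  fixes A B q :: real
  assumes A: "0 \<le> A" and q: "0 < q" and B: "0 \<le> B" "B \<le> A + 3 * q\<^sup>2"
  shows "B * A / (A\<^sup>2 + q ^ 4) \<le> 5/2"
proof -
  have den: "0 < A\<^sup>2 + q ^ 4" using q by (simp add: add_nonneg_pos)
  have "B * A \<le> (A + 3 * q\<^sup>2) * A" using B A by (intro mult_right_mono) auto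
  also have "\<dots> \<le> 5/2 * (A\<^sup>2 + q ^ 4)"
  proof -
    have "0 \<le> (A - q\<^sup>2)\<^sup>2" by simp
    then have h: "2 * (q\<^sup>2 * A) \<le> A\<^sup>2 + q ^ 4" by (simp add: power2_eq_square algebra_simps power4_eq_xxxx)
    have e: "(A + 3*q\<^sup>2)*A = A\<^sup>2 + 3*(q\<^sup>2*A)" by (simp add: algebra_simps power2_eq_square)
    have "0 \<le> q\<^sup>2 * A" "0 \<le> A\<^sup>2" "0 \<le> q ^ 4" using A by auto
    then have "A\<^sup>2 + 3*(q\<^sup>2*A) \<le> 5/2 * (A\<^sup>2 + q ^ 4)" using h lin_aux by blast
    then show ?thesis using e by simp
  qed
  finally show ?thesis using den by (simp add: divide_le_eq)
qed

lemma key_bound2: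
  fixes A B q :: real
  assumes A: "0 \<le> A" and q: "0 < q" and B: "0 \<le> B" "B \<le> A + 3 * q\<^sup>2"
  shows "B * q ^ 4 / (A\<^sup>2 + q ^ 4) \<le> q + 3 * q\<^sup>2 + q ^ 3 + 3 * q ^ 4"
proof (cases "A \<le> q")
  case True
  have den: "0 < A\<^sup>2 + q ^ 4" using q by (simp add: add_nonneg_pos)
  have "B * q ^ 4 / (A\<^sup>2 + q ^ 4) \<le> B"
    using den B q A by (simp add: divide_le_eq mult_left_mono)
  also have "\<dots> \<le> q + 3 * q\<^sup>2" using True B by simp
  finally have "B * q ^ 4 / (A\<^sup>2 + q ^ 4) \<le> q + 3 * q\<^sup>2" .
  moreover have "0 \<le> q ^ 3" "0 \<le> q ^ 4" using q by auto
  ultimately show ?thesis by linarith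
next
  case False
  then have Aq: "q < A" by simp
  have Apos: "0 < A" using Aq q by simp
  have "B * q ^ 4 / (A\<^sup>2 + q ^ 4) \<le> B * q ^ 4 / A\<^sup>2"
  proof -
    have "0 < A\<^sup>2" "0 < A\<^sup>2 + q ^ 4" using Apos q by (auto simp: add_pos_pos)
    then show ?thesis using B q by (intro divide_left_mono) auto
  qed
  also have "\<dots> \<le> (A + 3 * q\<^sup>2) * q ^ 4 / A\<^sup>2"
    using B q by (intro divide_right_mono mult_right_mono) auto
  also have "\<dots> = q ^ 4 / A + 3 * (q ^ 6 / A\<^sup>2)"
    using Apos by (simp add: field_simps power2_eq_square power4_eq_xxxx eval_nat_numeral)
  finally have c1: "B * q ^ 4 / (A\<^sup>2 + q ^ 4) \<le> q ^ 4 / A + 3 * (q ^ 6 / A\<^sup>2)" .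
  have c2: "q ^ 4 / A \<le> q ^ 3"
  proof -
    have "q ^ 4 = q ^ 3 * q" by (simp add: power_Suc2[symmetric] del: power_Suc2)
    also have "\<dots> \<le> q ^ 3 * A" using Aq q by (intro mult_left_mono) auto
    finally show ?thesis using Apos by (simp add: divide_le_eq)
  qed
  have c3: "q ^ 6 / A\<^sup>2 \<le> q ^ 4"
  proof -
    have "q\<^sup>2 \<le> A\<^sup>2" using Aq q by (intro power_mono) auto
    then have "q ^ 6 = q ^ 4 * q\<^sup>2" by (simp add: power_add[symmetric])
    also have "\<dots> \<le> q ^ 4 * A\<^sup>2" using \<open>q\<^sup>2 \<le> A\<^sup>2\<close> q by (intro mult_left_mono) auto
    finally show ?thesis using Apos by (simp add: divide_le_eq)
  qed
  from c1 c2 c3 have "B * q ^ 4 / (A\<^sup>2 + q ^ 4) \<le> q ^ 3 + 3 * q ^ 4" by linarith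
  moreover have "0 \<le> q" "0 \<le> q\<^sup>2" using q by auto
  ultimately show ?thesis by linarith
qed


definition sq :: "(real \<Rightarrow> real) \<Rightarrow> real \<Rightarrow> real" where
  "sq a e = sqrt (a e * a e + \<delta> e)"

lemma delta_le1: "e \<in> Iset \<Longrightarrow> \<delta> e \<le> 1"
  by (auto simp: \<delta>_def Iset_iff)

lemma sq_bounds: "\<bar>a e\<bar> \<le> sq a e" "sq a e \<le> \<bar>a e\<bar> + sqrt (\<delta> e)"
  using abs_le_sqrt_add[of "\<delta> e" "a e"] sqrt_le_abs_add[of "\<delta> e" "a e"] delta_pos[of e]
  by (auto simp: sq_def power2_eq_square)

lemma sq_EM: assumes "a \<in> EM_sm" shows "sq a \<in> EM_sm"
proof -
  have sa: "smooth_net a" and ma: "moderate a" using assms by (auto simp: EM_sm_def)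
  have "smooth_net (sq a)" unfolding sq_def[abs_def]
    by (intro smooth_sqrt smooth_add smooth_mul sa smooth_delta)
      (simp add: add_nonneg_pos delta_pos)
  moreover have "moderate (\<lambda>e. \<bar>a e\<bar> + 1)"
    by (intro mod_add mod_const mod_dom[OF ma]) auto
  then have "moderate (sq a)"
  proof (rule mod_dom)
    fix e assume e: "e \<in> Iset"
    have "sqrt (\<delta> e) \<le> 1" using delta_le1[OF e] by simp
    moreover have "0 \<le> sq a e" using sq_bounds(1)[of a e] abs_ge_zero[of "a e"] by linarith
    ultimately show "\<bar>sq a e\<bar> \<le> \<bar>\<bar>a e\<bar> + 1\<bar>" using sq_bounds(2)[of a e] by linarith
  qed
  ultimately show ?thesis by (simp add: EM_sm_def)
qed

lemma sq_close: "negligible (\<lambda>e. sq a e - \<bar>a e\<bar>)"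
proof (rule neg_dom[OF neg_sqrt[OF neg_delta']])
  fix e assume "e \<in> Iset"
  show "\<bar>sq a e - \<bar>a e\<bar>\<bar> \<le> \<bar>sqrt \<bar>\<delta> e\<bar>\<bar>"
    using sq_bounds[of a e] delta_pos[of e] by simp
qed

lemma abs_sm_eq: assumes X: "X \<in> Rsm" shows "abs_sm X = cls_sm (sq (rep X))"
proof -
  let ?a = "rep X"
  have aEM: "?a \<in> EM_sm" using rep_EM[OF X] .
  let ?Y = "cls_sm (sq ?a)"
  have Y: "?Y \<in> Rsm" using cls_in_Rsm[OF sq_EM[OF aEM]] .
  have n1: "negligible (\<lambda>e. sq ?a e - rep ?Y e)" using rep_cls[OF sq_EM[OF aEM]] .
  have tY: "tau_sm ?Y = cls_co (\<lambda>e. \<bar>?a e\<bar>)"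
    unfolding tau_sm_def
    by (rule cls_co_eq, rule neg_trans[OF neg_swap[OF n1] sq_close])
  have uniq: "Z = ?Y" if Z: "Z \<in> Rsm" "tau_sm Z = cls_co (\<lambda>e. \<bar>?a e\<bar>)" for Z
  proof -
    have "rep Z \<in> cls_co (rep Z)" using cls_co_self[OF EM_sm_co[OF rep_EM[OF Z(1)]]] .
    also have "cls_co (rep Z) = cls_co (rep ?Y)" using Z(2) tY by (simp add: tau_sm_def)
    finally have "negligible (\<lambda>e. rep ?Y e - rep Z e)" by (simp add: cls_co_def)
    then have "cls_sm (rep Z) = cls_sm (rep ?Y)" using cls_eq neg_swap by blast
    then show ?thesis using Rsm_eq[OF Z(1)] Rsm_eq[OF Y] by simp
  qed
  have "\<exists>!Z. Z \<in> Rsm \<and> tau_sm Z = cls_co (\<lambda>e. \<bar>?a e\<bar>)"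
    using Y tY uniq by blast
  then show ?thesis unfolding abs_sm_def
    by (rule the1_equality) (use Y tY in auto)
qed


lemma q_pow:
  fixes w :: real assumes "0 \<le> w"
  shows "(sqrt \<bar>sqrt \<bar>w\<bar>\<bar>)\<^sup>2 = sqrt w" "(sqrt \<bar>sqrt \<bar>w\<bar>\<bar>) ^ 4 = w"
proof -
  show 1: "(sqrt \<bar>sqrt \<bar>w\<bar>\<bar>)\<^sup>2 = sqrt w" using assms by simp
  have "(sqrt \<bar>sqrt \<bar>w\<bar>\<bar>) ^ 4 = ((sqrt \<bar>sqrt \<bar>w\<bar>\<bar>)\<^sup>2)\<^sup>2" by (simp only: power_mult[symmetric]) simp
  also have "\<dots> = (sqrt w)\<^sup>2" by (simp only: 1)
  also have "\<dots> = w" using assms by simp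
  finally show "(sqrt \<bar>sqrt \<bar>w\<bar>\<bar>) ^ 4 = w" .
qed

lemma abs_le_sqrt_of_sq: fixes t w :: real assumes "t * t \<le> w" shows "\<bar>t\<bar> \<le> sqrt w"
proof -
  have "sqrt (t\<^sup>2) \<le> sqrt w" using assms by (intro real_sqrt_le_mono) (simp add: power2_eq_square)
  then show ?thesis by simp
qed

theorem proposition4p25:
  assumes "ideal J Rsm_ring"
    and "x \<in> J"
    and "y \<in> Rsm"
    and "le_sm (abs_sm y) (abs_sm x)"
  shows "y \<in> J"
proof -
  have xR: "x \<in> Rsm" using ideal.Icarr[OF assms(1) assms(2)] by (simp add: Rsm_ring_def)
  define a where "a = rep x"
  define b where "b = rep y"
  have aEM: "a \<in> EM_sm" and bEM: "b \<in> EM_sm" using rep_EM xR assms(3) by (auto simp: a_def b_def)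
  have sa: "smooth_net a" and ma: "moderate a" and sb: "smooth_net b" and mb: "moderate b"
    using aEM bEM by (auto simp: EM_sm_def)
  obtain r s where r: "r \<in> cls_sm (sq b)" and s: "s \<in> cls_sm (sq a)" and rs: "\<forall>e\<in>Iset. r e \<le> s e"
    using assms(4) unfolding le_sm_def abs_sm_eq[OF xR] abs_sm_eq[OF assms(3)] a_def b_def by blast
  have rEM: "r \<in> EM_sm" and nr: "negligible (\<lambda>e. r e - sq b e)" using mem_cls[OF r] neg_swap by auto
  have sEM: "s \<in> EM_sm" and ns: "negligible (\<lambda>e. s e - sq a e)" using mem_cls[OF s] neg_swap by auto
  have sqa: "smooth_net (sq a)" and sqb: "smooth_net (sq b)" using sq_EM[OF aEM] sq_EM[OF bEM] by (auto simp: EM_sm_def)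
  have sr: "smooth_net r" and ss: "smooth_net s" using rEM sEM by (auto simp: EM_sm_def)
  define w where "w e = (r e - sq b e) * (r e - sq b e) + (s e - sq a e) * (s e - sq a e) + \<delta> e" for e
  have wpos: "0 < w e" for e
    unfolding w_def using delta_pos[of e] by (simp add: add_nonneg_pos)
  have smw: "smooth_net w" unfolding w_def[abs_def]
    by (intro smooth_add smooth_mul smooth_minus sr ss sqa sqb smooth_delta)
  have nw: "negligible w" unfolding w_def[abs_def]
    by (intro neg_add neg_mod_mul neg_imp_mod nr ns neg_delta')
  define q where "q e = sqrt \<bar>sqrt \<bar>w e\<bar>\<bar>" for e
  have nq: "negligible q" unfolding q_def[abs_def] by (intro neg_sqrt nw)
  have qpos: "0 < q e" for e using wpos[of e] by (simp add: q_def)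
  have q2: "(q e)\<^sup>2 = sqrt (w e)" and q4: "(q e) ^ 4 = w e" for e
    using q_pow[of "w e"] wpos[of e] by (auto simp: q_def less_imp_le)
  have bnd: "\<bar>b e\<bar> \<le> \<bar>a e\<bar> + 3 * (q e)\<^sup>2" if e: "e \<in> Iset" for e
  proof -
    have w1: "(r e - sq b e) * (r e - sq b e) \<le> w e" and w2: "(s e - sq a e) * (s e - sq a e) \<le> w e"
      and w3: "\<delta> e \<le> w e"
      unfolding w_def using delta_pos[of e] by auto
    have "\<bar>r e - sq b e\<bar> \<le> sqrt (w e)" by (rule abs_le_sqrt_of_sq[OF w1])
    moreover have "\<bar>s e - sq a e\<bar> \<le> sqrt (w e)" by (rule abs_le_sqrt_of_sq[OF w2])
    moreover have "sqrt (\<delta> e) \<le> sqrt (w e)" using w3 by simp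
    moreover have "r e \<le> s e" using rs e by blast
    ultimately show ?thesis using sq_bounds[of b e] sq_bounds[of a e] q2[of e] by linarith
  qed
  define z where "z e = b e * a e * (1 / (a e * a e + w e))" for e
  have den: "0 < a e * a e + w e" for e using wpos[of e] by (simp add: add_nonneg_pos)
  have zsm: "smooth_net z" unfolding z_def[abs_def]
    by (intro smooth_mul smooth_inv smooth_add sa sb smw den)
  have zmod: "moderate z"
  proof (rule mod_dom[OF mod_const[of "5/2"]])
    fix e assume e: "e \<in> Iset"
    have "\<bar>b e\<bar> * \<bar>a e\<bar> / (\<bar>a e\<bar>\<^sup>2 + (q e) ^ 4) \<le> 5/2"
      by (rule key_bound1) (use bnd[OF e] qpos[of e] in auto)
    moreover have "\<bar>z e\<bar> = \<bar>b e\<bar> * \<bar>a e\<bar> / (\<bar>a e\<bar>\<^sup>2 + (q e) ^ 4)"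
      using den[of e] unfolding z_def q4 by (simp add: abs_mult power2_eq_square)
    ultimately show "\<bar>z e\<bar> \<le> \<bar>5/2 :: real\<bar>" by simp
  qed
  have zEM: "z \<in> EM_sm" using zsm zmod by (simp add: EM_sm_def)
  define Z where "Z = cls_sm z"
  have ZR: "Z \<in> Rsm" unfolding Z_def by (rule cls_in_Rsm[OF zEM])
  have "Z \<otimes>\<^bsub>Rsm_ring\<^esub> x \<in> J"
    by (rule ideal.I_l_closed[OF assms(1) assms(2)]) (simp add: Rsm_ring_def ZR)
  moreover have "Z \<otimes>\<^bsub>Rsm_ring\<^esub> x = cls_sm (\<lambda>e. rep Z e * a e)"
    by (simp add: Rsm_ring_def a_def)
  moreover have "cls_sm (\<lambda>e. rep Z e * a e) = y"
  proof -
    define Bd where "Bd e = q e + 3 * (q e * q e) + q e * (q e * q e) + 3 * (q e * (q e * (q e * q e)))" for e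
    have nBd: "negligible Bd" unfolding Bd_def[abs_def]
      by (intro neg_add neg_cmul neg_mod_mul neg_imp_mod nq)
    have n2: "negligible (\<lambda>e. z e * a e - b e)"
    proof (rule neg_dom[OF nBd])
      fix e assume e: "e \<in> Iset"
      have "\<bar>b e\<bar> * (q e) ^ 4 / (\<bar>a e\<bar>\<^sup>2 + (q e) ^ 4) \<le> q e + 3 * (q e)\<^sup>2 + (q e) ^ 3 + 3 * (q e) ^ 4"
        by (rule key_bound2) (use bnd[OF e] qpos[of e] in auto)
      moreover have "z e * a e - b e = - (b e * w e / (a e * a e + w e))"
        using den[of e] unfolding z_def by (simp add: field_simps)
      then have "\<bar>z e * a e - b e\<bar> = \<bar>b e\<bar> * (q e) ^ 4 / (\<bar>a e\<bar>\<^sup>2 + (q e) ^ 4)"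
        using den[of e] wpos[of e] unfolding q4 by (simp add: abs_mult power2_eq_square)
      moreover have "q e + 3 * (q e)\<^sup>2 + (q e) ^ 3 + 3 * (q e) ^ 4 = \<bar>Bd e\<bar>"
        using qpos[of e] by (simp add: Bd_def power2_eq_square power3_eq_cube power4_eq_xxxx)
      ultimately show "\<bar>z e * a e - b e\<bar> \<le> \<bar>Bd e\<bar>" by simp
    qed
    have n1: "negligible (\<lambda>e. a e * (rep Z e - z e))"
      by (rule neg_mod_mul[OF ma]) (use neg_swap[OF rep_cls[OF zEM]] in \<open>simp add: Z_def\<close>)
    have "negligible (\<lambda>e. rep Z e * a e - b e)"
      using neg_add[OF n1 n2] by (simp add: algebra_simps)
    then have "cls_sm (\<lambda>e. rep Z e * a e) = cls_sm b" by (rule cls_eq)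
    also have "\<dots> = y" using Rsm_eq[OF assms(3)] by (simp add: b_def)
    finally show ?thesis .
  qed
  ultimately show ?thesis by simp
qed

end
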